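(* Let $\mathfrak M$ (modelled on $X$) be a Banach manifold with chart family $\mathscr A$ and $\mathfrak M_0$ (modelled on $X_0$) a $C^1$-embedded Banach submanifold of $\mathfrak M$ with respect to $\mathscr A$, such that $(\mathfrak M,\mathfrak M_0,\mathscr A)$ is inward spreadable. Let $\eta\in\mathfrak M_0$ and let $f:(-\varepsilon,\varepsilon)\to\mathfrak M_0$ with $f(0)=\eta$ be strongly differentiable at $t=0$. Then $f$ is fully differentiable at $t=0$: for every $\mathfrak M_0$-regular chart $(\mathcal U,\varphi)$ at $\eta$ the map $t\mapsto\varphi(f(t))$ is differentiable at $t=0$ in the topology of $X$, and for any two $\mathfrak M_0$-regular charts $(\mathcal U,\varphi),(\mathcal V,\psi)$ at $\eta$, $$(\psi\circ f)'(0)=(\psi\circ\varphi^{-1})'(\varphi(\eta))\,(\varphi\circ f)'(0).$$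
   Context: Densely embedded spaces and the class $\mathfrak C^k$. For Banach spaces $X$ and $X_0$, $X_0$ is a densely embedded Banach subspace of $X$ if $X_0$ is a dense linear subspace of $X$ and there is $C>0$ with $\|x\|_X\le C\|x\|_{X_0}$ for $x\in X_0$. For such $X_0\subseteq X$, a Banach space $Y$, an open set $U_0\subseteq X_0$ and an integer $k\ge1$, $\mathfrak C^k(U_0;X,Y)$ denotes the set of maps $F:U_0\to Y$ such that (i) for each $x_0\in U_0$ there are bounded symmetric $j$-linear maps $F^{(j)}(x_0):X^j\to Y$, $1\le j\le k$, with $\|F(x)-F(x_0)-\sum_{j=1}^k\frac1{j!}F^{(j)}(x_0)(x-x_0,\dots,x-x_0)\|_Y/\|x-x_0\|_{X_0}^k\to0$ as $\|x-x_0\|_{X_0}\to0$, and (ii) $x\mapsto F^{(j)}(x)$ is continuous from $U_0$ (with the $X_0$-topology) into the space $L^j(X,Y)$ of bounded $j$-linear maps. We write $F'=F^{(1)}$. Embedded submanifolds. Let $\mathfrak M,\mathfrak M_0$ be topological Banach manifolds modelled on $X$, $X_0$, let $\mathscr A$ be a family of local charts of $\mathfrak M$, and $k\ge1$. $\mathfrak M_0$ is a $C^k$-embedded Banach submanifold of $\mathfrak M$ with respect to $\mathscr A$ if: (D1) $X_0$ is a densely embedded Banach subspace of $X$; (D2) $\mathfrak M_0\subseteq\mathfrak M$ and $\mathcal U\cap\mathfrak M_0$ is open in $\mathfrak M_0$ for every open $\mathcal U\subseteq\mathfrak M$; (D3) the domains of the charts of $\mathscr A$ cover $\mathfrak M$;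 (D4) for $\eta\in\mathfrak M_0$ and $(\mathcal U,\varphi)\in\mathscr A$ with $\eta\in\mathcal U$, $(\mathcal U_0,\varphi|_{\mathcal U_0})$ with $\mathcal U_0:=\mathcal U\cap\mathfrak M_0$ is a local chart of $\mathfrak M_0$; (D5) for $\eta\in\mathfrak M_0$ and $(\mathcal U,\varphi),(\mathcal V,\psi)\in\mathscr A$ with $\eta\in\mathcal U\cap\mathcal V$, $\psi\circ\varphi^{-1}\in\mathfrak C^k(\varphi(\mathcal U_0\cap\mathcal V_0);X,X)$ and $\varphi\circ\psi^{-1}\in\mathfrak C^k(\psi(\mathcal U_0\cap\mathcal V_0);X,X)$. A chart of $\mathscr A$ whose domain contains $\eta$ is an $\mathfrak M_0$-regular local chart at $\eta$. $(\mathfrak M,\mathfrak M_0,\mathscr A)$ (with $\mathfrak M_0$ $C^1$-embedded) is inward spreadable if there is a Banach manifold $\mathfrak M_1\subseteq\mathfrak M_0$, modelled on a Banach space $X_1$, which is a $C^1$-embedded Banach submanifold of $\mathfrak M_0$ with respect to the restrictions to $\mathfrak M_0$ of the charts of $\mathscr A$ ($\mathfrak M_1$ is then an inner $C^1$-kernel and the charts of $\mathscr A$ are called $(\mathfrak M_0,\mathfrak M_1)$-regular). For charts at $\eta\in\mathfrak M_0$, $(\varphi\circ\psi^{-1})'(\psi(\eta))\in L(X)$ is the first derivative in the $\mathfrak C^1$ sense. A curve $f:(-\varepsilon,\varepsilon)\to\mathfrak M_0$ with $f(0)=\eta$ is strongly differentiable at $t=0$ if for some $\mathfrak M_0$-regular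 chart $\varphi$ at $\eta$, $t\mapsto\varphi(f(t))$ is differentiable at $t=0$ in the topology of $X_0$. *)

theory Defs
  imports "HOL-Analysis.Analysis"
begin

text \<open>A densely embedded
Banach subspace X0 of X is represented by a separate type 'b together with an
injective bounded linear map iota into X with dense range (so that
norm (iota x) <= C * norm x).\<close>

definition dense_embedding :: "('b::banach \<Rightarrow> 'a::banach) \<Rightarrow> bool" where
  "dense_embedding \<iota> \<longleftrightarrow> bounded_linear \<iota> \<and> inj \<iota> \<and> closure (range \<iota>) = UNIV"

definition chart :: "'m topology \<Rightarrow> 'm set \<Rightarrow> ('m \<Rightarrow> 'a::banach) \<Rightarrow> bool" where
  "chart M U \<phi> \<longleftrightarrow> openin M U \<and> open (\<phi> ` U) \<and>
     homeomorphic_map (subtopology M U) (top_of_set (\<phi> ` U)) \<phi>"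

definition banach_manifold :: "'a::banach itself \<Rightarrow> 'm topology \<Rightarrow> bool" where
  "banach_manifold (_::'a itself) M \<longleftrightarrow> Hausdorff_space M \<and>
     (\<forall>p\<in>topspace M. \<exists>U (\<phi>::'m \<Rightarrow> 'a). chart M U \<phi> \<and> p \<in> U)"

definition C1_deriv_at :: "('b::banach \<Rightarrow> 'a::banach) \<Rightarrow> ('b \<Rightarrow> 'y::banach) \<Rightarrow> 'b set
    \<Rightarrow> 'b \<Rightarrow> ('a \<Rightarrow>\<^sub>L 'y) \<Rightarrow> bool" where
  "C1_deriv_at \<iota> F S x0 D \<longleftrightarrow>
     ((\<lambda>x. norm (F x - F x0 - blinfun_apply D (\<iota> (x - x0))) / norm (x - x0)) \<longlongrightarrow> 0)
       (at x0 within S)"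

definition frakC1 :: "('b::banach \<Rightarrow> 'a::banach) \<Rightarrow> ('b \<Rightarrow> 'y::banach) \<Rightarrow> 'b set \<Rightarrow> bool" where
  "frakC1 \<iota> F S \<longleftrightarrow> open S \<and>
     (\<exists>F'::'b \<Rightarrow> ('a \<Rightarrow>\<^sub>L 'y). (\<forall>x\<in>S. C1_deriv_at \<iota> F S x (F' x)) \<and> continuous_on S F')"

definition trans_map :: "('b \<Rightarrow> 'a) \<Rightarrow> 'm set \<Rightarrow> ('m \<Rightarrow> 'a) \<Rightarrow> ('m \<Rightarrow> 'a) \<Rightarrow> 'b \<Rightarrow> 'a" where
  "trans_map \<iota> U \<phi> \<psi> = (\<lambda>y. \<psi> (inv_into U \<phi> (\<iota> y)))"

definition trans_dom :: "('b \<Rightarrow> 'a) \<Rightarrow> 'm topology \<Rightarrow> 'm set \<Rightarrow> 'm set \<Rightarrow> ('m \<Rightarrow> 'a) \<Rightarrow> 'b set" where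
  "trans_dom \<iota> M0 U V \<phi> = \<iota> -` (\<phi> ` (U \<inter> V \<inter> topspace M0))"

text \<open>M0 is a C^1-embedded Banach submanifold of M w.r.t. the chart family A,
conditions (D1)-(D5).  The restriction of phi to U0 as a chart of M0 is
p \<mapsto> iota^{-1}(phi p).\<close>
definition C1_embedded :: "('b::banach \<Rightarrow> 'a::banach) \<Rightarrow> 'm topology \<Rightarrow> 'm topology
    \<Rightarrow> ('m set \<times> ('m \<Rightarrow> 'a)) set \<Rightarrow> bool" where
  "C1_embedded \<iota> M M0 A \<longleftrightarrow>
     banach_manifold TYPE('a) M \<and> banach_manifold TYPE('b) M0 \<and>
     dense_embedding \<iota> \<and>
     topspace M0 \<subseteq> topspace M \<and> (\<forall>U. openin M U \<longrightarrow> openin M0 (U \<inter> topspace M0)) \<and>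
     (\<forall>(U,\<phi>)\<in>A. chart M U \<phi>) \<and> topspace M \<subseteq> \<Union> (fst ` A) \<and>
     (\<forall>\<eta>\<in>topspace M0. \<forall>(U,\<phi>)\<in>A. \<eta> \<in> U \<longrightarrow>
        \<phi> ` (U \<inter> topspace M0) \<subseteq> range \<iota> \<and>
        chart M0 (U \<inter> topspace M0) (\<lambda>p. inv \<iota> (\<phi> p))) \<and>
     (\<forall>\<eta>\<in>topspace M0. \<forall>(U,\<phi>)\<in>A. \<forall>(V,\<psi>)\<in>A. \<eta> \<in> U \<inter> V \<longrightarrow>
        frakC1 \<iota> (trans_map \<iota> U \<phi> \<psi>) (trans_dom \<iota> M0 U V \<phi>) \<and>
        frakC1 \<iota> (trans_map \<iota> V \<psi> \<phi>) (trans_dom \<iota> M0 V U \<psi>))"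

definition restrict_atlas :: "('b::banach \<Rightarrow> 'a::banach) \<Rightarrow> 'm topology \<Rightarrow> ('m set \<times> ('m \<Rightarrow> 'a)) set
    \<Rightarrow> ('m set \<times> ('m \<Rightarrow> 'b)) set" where
  "restrict_atlas \<iota> M0 A = (\<lambda>(U,\<phi>). (U \<inter> topspace M0, \<lambda>p. inv \<iota> (\<phi> p))) ` A"

definition strongly_diff_at0 :: "('b::banach \<Rightarrow> 'a::banach) \<Rightarrow> ('m set \<times> ('m \<Rightarrow> 'a)) set
    \<Rightarrow> (real \<Rightarrow> 'm) \<Rightarrow> 'm \<Rightarrow> bool" where
  "strongly_diff_at0 \<iota> A f \<eta> \<longleftrightarrow>
     (\<exists>(U,\<phi>)\<in>A. \<eta> \<in> U \<and> (\<forall>\<^sub>F t in nhds 0. f t \<in> U) \<and>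
        (\<lambda>t. inv \<iota> (\<phi> (f t))) differentiable (at 0))"

end

theory Submission
  imports Defs
begin

lemma mvt_seg:
  fixes G :: "'b::banach \<Rightarrow> 'y::banach" and \<iota> :: "'b \<Rightarrow> 'a::banach"
    and F' :: "'b \<Rightarrow> ('a \<Rightarrow>\<^sub>L 'y)"
  assumes bl: "bounded_linear \<iota>"
    and der: "\<And>z. z \<in> B \<Longrightarrow> (G has_derivative (\<lambda>y. blinfun_apply (F' z) (\<iota> y))) (at z)"
    and conv: "convex B" and x0: "x0 \<in> B" and x1: "x0 + h \<in> B"
    and bnd: "\<And>z. z \<in> B \<Longrightarrow> norm (F' z - E) \<le> e"
  shows "norm (G (x0+h) - G x0 - blinfun_apply E (\<iota> h)) \<le> e * norm (\<iota> h)"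
proof -
  define p where "p = (\<lambda>s::real. G (x0 + s *\<^sub>R h) - blinfun_apply E (\<iota> (x0 + s *\<^sub>R h)))"
  have inB: "x0 + s *\<^sub>R h \<in> B" if "s \<in> {0..1}" for s
  proof -
    have "x0 + s *\<^sub>R h = (1 - s) *\<^sub>R x0 + s *\<^sub>R (x0 + h)" by (simp add: algebra_simps)
    then show ?thesis using conv x0 x1 that by (simp add: convex_def)
  qed
  have dp: "(p has_derivative (\<lambda>r. r *\<^sub>R blinfun_apply (F' (x0 + s *\<^sub>R h) - E) (\<iota> h))) (at s within {0..1})"
    if s: "s \<in> {0..1}" for s
  proof -
    have d1: "((\<lambda>s. x0 + s *\<^sub>R h) has_derivative (\<lambda>r. r *\<^sub>R h)) (at s within {0..1})"
      by (auto intro!: derivative_eq_intros)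
    have d2: "(G has_derivative (\<lambda>y. blinfun_apply (F' (x0 + s *\<^sub>R h)) (\<iota> y))) (at (x0 + s *\<^sub>R h) within (\<lambda>s. x0 + s *\<^sub>R h) ` {0..1})"
      using der[OF inB[OF s]] by (rule has_derivative_at_withinI)
    have d3: "((\<lambda>s. G (x0 + s *\<^sub>R h)) has_derivative (\<lambda>r. blinfun_apply (F' (x0 + s *\<^sub>R h)) (\<iota> (r *\<^sub>R h)))) (at s within {0..1})"
      using diff_chain_within[OF d1 d2] by (simp add: o_def)
    have bl2: "bounded_linear (\<lambda>y. blinfun_apply E (\<iota> y))"
      using bl by (simp add: bounded_linear_compose[OF blinfun.bounded_linear_right])
    have d4: "((\<lambda>s. blinfun_apply E (\<iota> (x0 + s *\<^sub>R h))) has_derivative (\<lambda>r. blinfun_apply E (\<iota> (r *\<^sub>R h)))) (at s within {0..1})"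
      using diff_chain_within[OF d1 has_derivative_at_withinI[OF bounded_linear_imp_has_derivative[OF bl2]]]
      by (simp add: o_def)
    have "(p has_derivative (\<lambda>r. blinfun_apply (F' (x0 + s *\<^sub>R h)) (\<iota> (r *\<^sub>R h)) - blinfun_apply E (\<iota> (r *\<^sub>R h)))) (at s within {0..1})"
      unfolding p_def by (rule has_derivative_diff[OF d3 d4])
    moreover have "(\<lambda>r. blinfun_apply (F' (x0 + s *\<^sub>R h)) (\<iota> (r *\<^sub>R h)) - blinfun_apply E (\<iota> (r *\<^sub>R h)))
        = (\<lambda>r. r *\<^sub>R blinfun_apply (F' (x0 + s *\<^sub>R h) - E) (\<iota> h))"
      using bl by (auto simp: linear_scale[OF bounded_linear.linear[OF bl]] blinfun.scaleR_right blinfun.diff_left algebra_simps)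
    ultimately show ?thesis by simp
  qed
  have bd: "onorm (\<lambda>r. r *\<^sub>R blinfun_apply (F' (x0 + s *\<^sub>R h) - E) (\<iota> h)) \<le> e * norm (\<iota> h)"
    if s: "s \<in> {0..1}" for s
  proof -
    have "onorm (\<lambda>r::real. r *\<^sub>R blinfun_apply (F' (x0 + s *\<^sub>R h) - E) (\<iota> h))
        = onorm (\<lambda>r::real. r) * norm (blinfun_apply (F' (x0 + s *\<^sub>R h) - E) (\<iota> h))"
      by (rule onorm_scaleR_left) (rule bounded_linear_ident)
    also have "\<dots> = norm (blinfun_apply (F' (x0 + s *\<^sub>R h) - E) (\<iota> h))"
      by (simp add: onorm_id[unfolded id_def])
    also have "\<dots> \<le> norm (F' (x0 + s *\<^sub>R h) - E) * norm (\<iota> h)" by (rule norm_blinfun)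
    also have "\<dots> \<le> e * norm (\<iota> h)" by (rule mult_right_mono[OF bnd[OF inB[OF s]]]) simp
    finally show ?thesis .
  qed
  have "norm (p 1 - p 0) \<le> e * norm (\<iota> h) * norm (1 - 0::real)"
    by (rule differentiable_bound[OF convex_real_interval(5) dp bd]) auto
  moreover have "p 1 - p 0 = G (x0+h) - G x0 - blinfun_apply E (\<iota> h)"
    using bl by (simp add: p_def linear_add[OF bounded_linear.linear[OF bl]] blinfun.add_right linear_scale[OF bounded_linear.linear[OF bl]] blinfun.scaleR_right algebra_simps)
  ultimately show ?thesis by simp
qed


lemma C1_has_derivative:
  fixes G :: "'b::banach \<Rightarrow> 'y::banach" and \<iota> :: "'b \<Rightarrow> 'a::banach"
  assumes bl: "bounded_linear \<iota>" and S: "open S" and z: "z \<in> S"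
    and C: "C1_deriv_at \<iota> G S z D"
  shows "(G has_derivative (\<lambda>y. blinfun_apply D (\<iota> y))) (at z)"
proof -
  have bl2: "bounded_linear (\<lambda>y. blinfun_apply D (\<iota> y))"
    using bl by (simp add: bounded_linear_compose[OF blinfun.bounded_linear_right])
  have "at z within S = at z" using z S by (rule at_within_open)
  then have "((\<lambda>x. norm (G x - G z - blinfun_apply D (\<iota> (x - z))) / norm (x - z)) \<longlongrightarrow> 0) (at z)"
    using C unfolding C1_deriv_at_def by metis
  with bl2 show ?thesis
    unfolding has_derivative_iff_norm[of G _ z UNIV] by blast
qed

lemma key:
  fixes G :: "'b::banach \<Rightarrow> 'y::banach" and \<iota> :: "'b \<Rightarrow> 'a::banach"
    and F' :: "'b \<Rightarrow> ('a \<Rightarrow>\<^sub>L 'y)" and k :: "real \<Rightarrow> 'b"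
  assumes bl: "bounded_linear \<iota>" and S: "open S" and x0: "x0 \<in> S"
    and C1: "\<forall>x\<in>S. C1_deriv_at \<iota> G S x (F' x)" and cont: "continuous_on S F'"
    and kc: "(k \<longlongrightarrow> x0) (at 0)" and k0: "k 0 = x0"
    and kd: "((\<lambda>t. \<iota> (k t)) has_vector_derivative v) (at 0)"
  shows "((\<lambda>t. G (k t)) has_vector_derivative blinfun_apply (F' x0) v) (at 0)"
proof -
  have der: "(G has_derivative (\<lambda>y. blinfun_apply (F' z) (\<iota> y))) (at z)" if "z \<in> S" for z
    using C1_has_derivative[OF bl S that] C1 that by blast
  define R where "R = (\<lambda>t. G (k t) - G x0 - blinfun_apply (F' x0) (\<iota> (k t - x0)))"
  have evd: "\<forall>\<^sub>F t in at 0. norm (\<iota> (k t) - \<iota> (k 0) - t *\<^sub>R v) / norm t < 1"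
  proof -
    have "((\<lambda>h. norm (\<iota> (k (0 + h)) - \<iota> (k 0) - h *\<^sub>R v) / norm h) \<longlongrightarrow> 0) (at 0)"
      using kd unfolding has_vector_derivative_def has_derivative_at by blast
    then have "\<forall>\<^sub>F h in at 0. norm (\<iota> (k (0 + h)) - \<iota> (k 0) - h *\<^sub>R v) / norm h < 1"
      by (rule order_tendstoD(2)) simp
    then show ?thesis by simp
  qed
  have evb: "\<forall>\<^sub>F t in at 0. norm (\<iota> (k t - x0)) \<le> (norm v + 1) * norm t"
    using eventually_conj[OF evd eventually_neq_at_within[of 0 0 UNIV]]
  proof (rule eventually_mono)
    fix t :: real assume a0: "norm (\<iota> (k t) - \<iota> (k 0) - t *\<^sub>R v) / norm t < 1 \<and> t \<noteq> 0"
    then have a: "norm (\<iota> (k t) - \<iota> (k 0) - t *\<^sub>R v) / norm t < 1" and "t \<noteq> 0" by auto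
    with a have b: "norm (\<iota> (k t) - \<iota> (k 0) - t *\<^sub>R v) \<le> norm t" by (simp add: divide_less_eq)
    have "\<iota> (k t - x0) = (\<iota> (k t) - \<iota> (k 0) - t *\<^sub>R v) + t *\<^sub>R v"
      using k0 linear_diff[OF bounded_linear.linear[OF bl]] by simp
    then have "norm (\<iota> (k t - x0)) \<le> norm (\<iota> (k t) - \<iota> (k 0) - t *\<^sub>R v) + norm t * norm v"
      by (metis norm_scaleR norm_triangle_ineq real_norm_def)
    also have "\<dots> \<le> (norm v + 1) * norm t" using b by (simp add: algebra_simps)
    finally show "norm (\<iota> (k t - x0)) \<le> (norm v + 1) * norm t" .
  qed
  have Rsmall: "\<forall>\<^sub>F t in at 0. norm (R t) \<le> e * norm (\<iota> (k t - x0))" if e: "e > 0" for e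
  proof -
    obtain d where d: "d > 0" "\<forall>z\<in>S. dist z x0 < d \<longrightarrow> dist (F' z) (F' x0) < e"
      using cont x0 e unfolding continuous_on_iff by blast
    obtain d2 where d2: "d2 > 0" "ball x0 d2 \<subseteq> S" using S x0 open_contains_ball by blast
    define r where "r = min d d2"
    have r: "r > 0" "ball x0 r \<subseteq> S" using d d2 by (auto simp: r_def)
    have bnd: "norm (F' z - F' x0) \<le> e" if "z \<in> ball x0 r" for z
    proof -
      have "z \<in> S" "dist z x0 < d" using r that by (auto simp: r_def dist_commute)
      then show ?thesis using d(2) by (auto simp: dist_norm less_imp_le)
    qed
    have "\<forall>\<^sub>F t in at 0. k t \<in> ball x0 r"
      using kc r(1) by (rule tendstoD[THEN eventually_mono]) (simp add: dist_commute)
    then show ?thesis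
    proof (rule eventually_mono)
      fix t assume kt: "k t \<in> ball x0 r"
      have "norm (G (x0 + (k t - x0)) - G x0 - blinfun_apply (F' x0) (\<iota> (k t - x0))) \<le> e * norm (\<iota> (k t - x0))"
        by (rule mvt_seg[OF bl _ convex_ball, where G=G and F'=F' and h="k t - x0" and E="F' x0" and e=e])
           (use der r kt bnd in auto)
      then show "norm (R t) \<le> e * norm (\<iota> (k t - x0))" by (simp add: R_def)
    qed
  qed
  have R0: "R 0 = 0" using k0 bl by (simp add: R_def linear_0[OF bounded_linear.linear[OF bl]])
  have "(R has_derivative (\<lambda>_. 0)) (at 0)"
    unfolding has_derivative_at
  proof (intro conjI bounded_linear_zero)
    show "((\<lambda>h. norm (R (0 + h) - R 0 - 0) / norm h) \<longlongrightarrow> 0) (at 0)"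
    proof (rule tendstoI)
      fix e :: real assume e: "e > 0"
      define e' where "e' = e / (norm v + 2)"
      have n2: "norm v + 2 > 0" using norm_ge_zero[of v] by linarith
      have e': "e' > 0" using e n2 by (simp add: e'_def)
      have lt: "e' * (norm v + 1) < e"
      proof -
        have "e' * (norm v + 1) < e' * (norm v + 2)" using e' by simp
        also have "\<dots> = e" using n2 by (simp add: e'_def)
        finally show ?thesis .
      qed
      show "\<forall>\<^sub>F h in at 0. dist (norm (R (0 + h) - R 0 - 0) / norm h) 0 < e"
        using Rsmall[OF e'] evb eventually_neq_at_within[of 0 0 UNIV]
      proof (eventually_elim)
        case (elim t)
        then have tn: "t \<noteq> 0" by simp
        have "norm (R t) \<le> e' * ((norm v + 1) * norm t)"
          using elim(1) mult_left_mono[OF elim(2), of e'] e' by linarith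
        also have "\<dots> < e * norm t" using lt tn by (simp add: mult.assoc[symmetric])
        finally show ?case using tn R0 by (simp add: divide_less_eq)
      qed
    qed
  qed
  then have dR: "(R has_vector_derivative 0) (at 0)" by (simp add: has_vector_derivative_def)
  have dL: "((\<lambda>t. blinfun_apply (F' x0) (\<iota> (k t))) has_vector_derivative blinfun_apply (F' x0) v) (at 0)"
    by (rule bounded_linear.has_vector_derivative[OF blinfun.bounded_linear_right kd])
  have eq: "G (k t) = R t + G x0 + (blinfun_apply (F' x0) (\<iota> (k t)) - blinfun_apply (F' x0) (\<iota> x0))" for t
    by (simp add: R_def linear_diff[OF bounded_linear.linear[OF bl]] blinfun.diff_right)
  have "((\<lambda>t. R t + G x0 + (blinfun_apply (F' x0) (\<iota> (k t)) - blinfun_apply (F' x0) (\<iota> x0)))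
      has_vector_derivative (0 + 0 + (blinfun_apply (F' x0) v - 0))) (at 0)"
    by (intro derivative_intros dR dL)
  then show ?thesis by (simp add: eq)
qed


lemma uniq_D:
  fixes G :: "'b::banach \<Rightarrow> 'y::banach" and \<iota> :: "'b \<Rightarrow> 'a::banach"
  assumes bl: "bounded_linear \<iota>" and dense: "closure (range \<iota>) = UNIV"
    and S: "open S" and x0: "x0 \<in> S"
    and D: "C1_deriv_at \<iota> G S x0 D" and E: "C1_deriv_at \<iota> G S x0 E"
  shows "D = E"
proof -
  have "(\<lambda>y. blinfun_apply D (\<iota> y)) = (\<lambda>y. blinfun_apply E (\<iota> y))"
    by (rule has_derivative_unique[OF C1_has_derivative[OF bl S x0 D] C1_has_derivative[OF bl S x0 E]])
  then have "range \<iota> \<subseteq> {x. blinfun_apply D x = blinfun_apply E x}" by (auto dest: fun_cong)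
  moreover have "closed {x. blinfun_apply D x = blinfun_apply E x}"
    by (intro closed_Collect_eq linear_continuous_on blinfun.bounded_linear_right)
  ultimately have "closure (range \<iota>) \<subseteq> {x. blinfun_apply D x = blinfun_apply E x}"
    by (rule closure_minimal)
  then show ?thesis using dense by (auto intro: blinfun_eqI)
qed

lemma chart_openin: "chart X U c \<Longrightarrow> openin X U"
  by (simp add: chart_def)

lemma chart_inj: "chart X U c \<Longrightarrow> inj_on c U"
  using homeomorphic_imp_injective_map[of "subtopology X U" _ c]
    topspace_subtopology_subset[OF openin_subset, of X U]
  by (auto simp: chart_def)

lemma ev_at_nhds: "eventually P (at x) \<Longrightarrow> P x \<Longrightarrow> eventually P (nhds x)"
  by (auto simp: eventually_at_filter elim: eventually_mono)

lemma chart_cont: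
  fixes c :: "'m \<Rightarrow> 'b::banach" and f :: "real \<Rightarrow> 'm"
  assumes ch: "chart X U c" and eta: "\<eta> \<in> U" and f0: "f 0 = \<eta>"
    and Pc: "\<forall>W. openin X W \<longrightarrow> \<eta> \<in> W \<longrightarrow> (\<forall>\<^sub>F t in nhds 0. f t \<in> W)"
  shows "((\<lambda>t. c (f t)) \<longlongrightarrow> c \<eta>) (at 0)"
proof (rule topological_tendstoI)
  fix Ob assume Ob: "open Ob" "c \<eta> \<in> Ob"
  have hm: "homeomorphic_map (subtopology X U) (top_of_set (c ` U)) c" and oU: "openin X U"
    using ch by (auto simp: chart_def)
  have ts: "topspace (subtopology X U) = U" using oU openin_subset topspace_subtopology_subset by metis
  have "openin (subtopology X U) {x \<in> topspace (subtopology X U). c x \<in> Ob \<inter> c ` U}"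
    by (rule openin_continuous_map_preimage[OF homeomorphic_imp_continuous_map[OF hm]])
       (use openin_open_Int[OF Ob(1), of "c ` U"] in \<open>simp add: Int_commute\<close>)
  then have "openin X {x \<in> U. c x \<in> Ob \<inter> c ` U}" using ts oU openin_trans_full by metis
  then have "\<forall>\<^sub>F t in nhds 0. f t \<in> {x \<in> U. c x \<in> Ob \<inter> c ` U}" using Pc eta Ob by auto
  then have "\<forall>\<^sub>F t in at 0. f t \<in> {x \<in> U. c x \<in> Ob \<inter> c ` U}"
    by (simp add: eventually_at_filter eventually_mono)
  then show "\<forall>\<^sub>F t in at 0. c (f t) \<in> Ob" by (auto elim: eventually_mono)
qed


lemma trans_curve:
  fixes \<iota> :: "'b::banach \<Rightarrow> 'a::banach" and \<phi> \<psi> :: "'m \<Rightarrow> 'a" and f :: "real \<Rightarrow> 'm"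
  assumes bl: "bounded_linear \<iota>" and dense: "closure (range \<iota>) = UNIV"
    and chU: "chart M0 (U \<inter> topspace M0) (\<lambda>p. inv \<iota> (\<phi> p))"
    and rng: "\<phi> ` (U \<inter> topspace M0) \<subseteq> range \<iota>"
    and injU: "inj_on \<phi> U"
    and fr: "frakC1 \<iota> (trans_map \<iota> U \<phi> \<psi>) (trans_dom \<iota> M0 U V \<phi>)"
    and etaU: "\<eta> \<in> U" and etaV: "\<eta> \<in> V" and eta: "\<eta> \<in> topspace M0" and f0: "f 0 = \<eta>"
    and Pc: "\<forall>W. openin M0 W \<longrightarrow> \<eta> \<in> W \<longrightarrow> (\<forall>\<^sub>F t in nhds 0. f t \<in> W)"
    and oV: "openin M0 (V \<inter> topspace M0)"
    and wd: "((\<lambda>t. \<phi> (f t)) has_vector_derivative w) (at 0)"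
  shows "\<exists>E. ((\<lambda>t. \<psi> (f t)) has_vector_derivative blinfun_apply E w) (at 0) \<and>
     (\<forall>D. C1_deriv_at \<iota> (trans_map \<iota> U \<phi> \<psi>) (trans_dom \<iota> M0 U V \<phi>) (inv \<iota> (\<phi> \<eta>)) D \<longrightarrow> D = E)"
proof -
  define S where "S = trans_dom \<iota> M0 U V \<phi>"
  define G where "G = trans_map \<iota> U \<phi> \<psi>"
  obtain F' where S: "open S" and C1: "\<forall>x\<in>S. C1_deriv_at \<iota> G S x (F' x)" and cont: "continuous_on S F'"
    using fr unfolding frakC1_def S_def G_def by blast
  define k where "k = (\<lambda>t. inv \<iota> (\<phi> (f t)))"
  define x0 where "x0 = inv \<iota> (\<phi> \<eta>)"
  have ik: "\<iota> (inv \<iota> (\<phi> p)) = \<phi> p" if "p \<in> U \<inter> topspace M0" for p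
    proof -
    have "\<phi> p \<in> range \<iota>" using rng that by blast
    then show ?thesis by (rule f_inv_into_f)
  qed
  have oU: "openin M0 (U \<inter> topspace M0)" using chU by (rule chart_openin)
  have evW: "\<forall>\<^sub>F t in nhds 0. f t \<in> (U \<inter> topspace M0) \<inter> (V \<inter> topspace M0)"
    proof -
    have "openin M0 ((U \<inter> topspace M0) \<inter> (V \<inter> topspace M0))" using oU oV by (rule openin_Int)
    then show ?thesis using Pc etaU etaV eta by blast
  qed
  have k0: "k 0 = x0" by (simp add: k_def x0_def f0)
  have x0S: "x0 \<in> S"
    using ik[of \<eta>] etaU etaV eta by (auto simp: S_def trans_dom_def x0_def)
  have kc: "(k \<longlongrightarrow> x0) (at 0)"
    unfolding k_def x0_def
    by (rule chart_cont[OF chU _ f0 Pc]) (use etaU eta in auto)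
  have kd: "((\<lambda>t. \<iota> (k t)) has_vector_derivative w) (at 0)"
  proof -
    have "\<forall>\<^sub>F t in nhds 0. t \<in> UNIV \<longrightarrow> \<iota> (k t) = \<phi> (f t)"
      using evW by (auto simp: k_def ik elim: eventually_mono)
    moreover have "\<iota> (k 0) = \<phi> (f 0)" using ik[of \<eta>] etaU eta by (simp add: k_def f0)
    ultimately show ?thesis using wd has_vector_derivative_cong_ev[where S=UNIV and x=0 and f="\<lambda>t. \<iota> (k t)" and g="\<lambda>t. \<phi> (f t)" and f'=w] by simp
  qed
  have dG: "((\<lambda>t. G (k t)) has_vector_derivative blinfun_apply (F' x0) w) (at 0)"
    by (rule key[OF bl S x0S C1 cont kc k0 kd])
  have Gk: "G (k t) = \<psi> (f t)" if "f t \<in> U \<inter> topspace M0" for t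
    using that ik[OF that] injU by (simp add: G_def k_def trans_map_def inv_into_f_f)
  have "((\<lambda>t. \<psi> (f t)) has_vector_derivative blinfun_apply (F' x0) w) (at 0)"
  proof -
    have "\<forall>\<^sub>F t in nhds 0. t \<in> UNIV \<longrightarrow> G (k t) = \<psi> (f t)"
      using evW by (auto simp: Gk elim: eventually_mono)
    moreover have "G (k 0) = \<psi> (f 0)" using Gk etaU eta f0 by simp
    ultimately show ?thesis using dG has_vector_derivative_cong_ev[where S=UNIV and x=0 and f="\<lambda>t. G (k t)" and g="\<lambda>t. \<psi> (f t)" and f'="blinfun_apply (F' x0) w"] by simp
  qed
  moreover have "D = F' x0" if D: "C1_deriv_at \<iota> (trans_map \<iota> U \<phi> \<psi>) (trans_dom \<iota> M0 U V \<phi>) (inv \<iota> (\<phi> \<eta>)) D" for D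
    by (rule uniq_D[OF bl dense S x0S]) (use D C1 x0S in \<open>auto simp: S_def G_def x0_def\<close>)
  ultimately show ?thesis by blast
qed

theorem lemma2p7:
  fixes \<iota> :: "'b::banach \<Rightarrow> 'a::banach"
    and \<iota>1 :: "'c::banach \<Rightarrow> 'b"
    and M M0 M1 :: "'m topology"
    and A :: "('m set \<times> ('m \<Rightarrow> 'a)) set"
    and f :: "real \<Rightarrow> 'm" and \<eta> :: 'm and \<epsilon> :: real
  assumes emb: "C1_embedded \<iota> M M0 A"
    and spread: "C1_embedded \<iota>1 M0 M1 (restrict_atlas \<iota> M0 A)"
    and eta: "\<eta> \<in> topspace M0"
    and eps: "\<epsilon> > 0"
    and fM0: "\<forall>t\<in>{-\<epsilon><..<\<epsilon>}. f t \<in> topspace M0"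
    and f0: "f 0 = \<eta>"
    and strong: "strongly_diff_at0 \<iota> A f \<eta>"
  shows "(\<forall>(U,\<phi>)\<in>A. \<eta> \<in> U \<longrightarrow>
            (\<forall>\<^sub>F t in nhds 0. f t \<in> U) \<and> (\<lambda>t. \<phi> (f t)) differentiable (at 0)) \<and>
         (\<forall>(U,\<phi>)\<in>A. \<forall>(V,\<psi>)\<in>A. \<eta> \<in> U \<and> \<eta> \<in> V \<longrightarrow>
            (\<forall>D. C1_deriv_at \<iota> (trans_map \<iota> U \<phi> \<psi>) (trans_dom \<iota> M0 U V \<phi>) (inv \<iota> (\<phi> \<eta>)) D \<longrightarrow>
               vector_derivative (\<lambda>t. \<psi> (f t)) (at 0)
                 = blinfun_apply D (vector_derivative (\<lambda>t. \<phi> (f t)) (at 0))))"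
proof -
  note e = emb[unfolded C1_embedded_def]
  have de: "dense_embedding \<iota>" using e by (elim conjE)
  then have bl: "bounded_linear \<iota>" and dense: "closure (range \<iota>) = UNIV"
    by (auto simp: dense_embedding_def)
  have D2all: "\<forall>U. openin M U \<longrightarrow> openin M0 (U \<inter> topspace M0)" using e by (elim conjE)
  have D2: "\<And>U. openin M U \<Longrightarrow> openin M0 (U \<inter> topspace M0)" using D2all by blast
  have chall: "\<forall>(U,\<phi>)\<in>A. chart M U \<phi>" using e by (elim conjE)
  have chA: "\<And>U \<phi>. (U,\<phi>) \<in> A \<Longrightarrow> chart M U \<phi>"
  proof -
    fix U \<phi> assume "(U,\<phi>) \<in> A"
    from bspec[OF chall this] show "chart M U \<phi>" by simp
  qed
  have D4all: "\<forall>\<eta>\<in>topspace M0. \<forall>(U,\<phi>)\<in>A. \<eta> \<in> U \<longrightarrow>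
        \<phi> ` (U \<inter> topspace M0) \<subseteq> range \<iota> \<and> chart M0 (U \<inter> topspace M0) (\<lambda>p. inv \<iota> (\<phi> p))"
    using e by (elim conjE)
  have D4: "\<And>U \<phi>. (U,\<phi>) \<in> A \<Longrightarrow> \<eta> \<in> U \<Longrightarrow>
      \<phi> ` (U \<inter> topspace M0) \<subseteq> range \<iota> \<and> chart M0 (U \<inter> topspace M0) (\<lambda>p. inv \<iota> (\<phi> p))"
  proof -
    fix U \<phi> assume a: "(U,\<phi>) \<in> A" "\<eta> \<in> U"
    from bspec[OF bspec[OF D4all eta] a(1)] a(2)
    show "\<phi> ` (U \<inter> topspace M0) \<subseteq> range \<iota> \<and> chart M0 (U \<inter> topspace M0) (\<lambda>p. inv \<iota> (\<phi> p))" by simp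
  qed
  have D5all: "\<forall>\<eta>\<in>topspace M0. \<forall>(U,\<phi>)\<in>A. \<forall>(V,\<psi>)\<in>A. \<eta> \<in> U \<inter> V \<longrightarrow>
        frakC1 \<iota> (trans_map \<iota> U \<phi> \<psi>) (trans_dom \<iota> M0 U V \<phi>) \<and>
        frakC1 \<iota> (trans_map \<iota> V \<psi> \<phi>) (trans_dom \<iota> M0 V U \<psi>)"
    using e by (elim conjE)
  have D5: "\<And>U \<phi> V \<psi>. (U,\<phi>) \<in> A \<Longrightarrow> (V,\<psi>) \<in> A \<Longrightarrow> \<eta> \<in> U \<Longrightarrow> \<eta> \<in> V \<Longrightarrow>
      frakC1 \<iota> (trans_map \<iota> U \<phi> \<psi>) (trans_dom \<iota> M0 U V \<phi>)"
  proof -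
    fix U \<phi> V \<psi> assume a: "(U,\<phi>) \<in> A" "(V,\<psi>) \<in> A" "\<eta> \<in> U" "\<eta> \<in> V"
    have "\<forall>(V,\<psi>)\<in>A. \<eta> \<in> U \<inter> V \<longrightarrow>
        frakC1 \<iota> (trans_map \<iota> U \<phi> \<psi>) (trans_dom \<iota> M0 U V \<phi>) \<and>
        frakC1 \<iota> (trans_map \<iota> V \<psi> \<phi>) (trans_dom \<iota> M0 V U \<psi>)"
      using bspec[OF bspec[OF D5all eta] a(1)] by simp
    from bspec[OF this a(2)] a(3,4)
    show "frakC1 \<iota> (trans_map \<iota> U \<phi> \<psi>) (trans_dom \<iota> M0 U V \<phi>)" by simp
  qed
  obtain U0 \<phi>0 where A0: "(U0,\<phi>0) \<in> A" and etaU0: "\<eta> \<in> U0"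
    and evf0: "\<forall>\<^sub>F t in nhds 0. f t \<in> U0"
    and gd: "(\<lambda>t. inv \<iota> (\<phi>0 (f t))) differentiable (at 0)"
    using strong unfolding strongly_diff_at0_def by blast
  define g where "g = (\<lambda>t. inv \<iota> (\<phi>0 (f t)))"
  define U0' where "U0' = U0 \<inter> topspace M0"
  define c0 where "c0 = (\<lambda>p. inv \<iota> (\<phi>0 p))"
  have rng0: "\<phi>0 ` U0' \<subseteq> range \<iota>" and ch0: "chart M0 U0' c0"
    using D4[OF A0 etaU0] by (auto simp: U0'_def c0_def)
  have evM0: "\<forall>\<^sub>F t in nhds 0. f t \<in> topspace M0"
  proof -
    have "\<forall>\<^sub>F t in nhds 0. t \<in> {-\<epsilon><..<\<epsilon>}" by (rule eventually_nhds_in_open) (use eps in auto)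
    then show ?thesis using fM0 by (auto elim: eventually_mono)
  qed
  have evU0: "\<forall>\<^sub>F t in nhds 0. f t \<in> U0'"
    using eventually_conj[OF evf0 evM0] by (auto simp: U0'_def elim: eventually_mono)
  have etaU0': "\<eta> \<in> U0'" using etaU0 eta by (simp add: U0'_def)
  have gc: "(g \<longlongrightarrow> c0 \<eta>) (at 0)"
  proof -
    have "continuous (at 0) g" using gd unfolding g_def by (rule differentiable_imp_continuous_within)
    then show ?thesis by (simp add: continuous_at g_def c0_def f0)
  qed
  have Pc: "\<forall>W. openin M0 W \<longrightarrow> \<eta> \<in> W \<longrightarrow> (\<forall>\<^sub>F t in nhds 0. f t \<in> W)"
  proof (intro allI impI)
    fix W assume W: "openin M0 W" "\<eta> \<in> W"
    have hm: "homeomorphic_map (subtopology M0 U0') (top_of_set (c0 ` U0')) c0"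
      and oc: "open (c0 ` U0')" and oU: "openin M0 U0'" using ch0 by (auto simp: chart_def)
    have ts: "topspace (subtopology M0 U0') = U0'"
      using oU openin_subset topspace_subtopology_subset by metis
    have "openin (subtopology M0 U0') (W \<inter> U0')" using W(1) by (rule openin_subtopology_Int)
    then have "openin (top_of_set (c0 ` U0')) (c0 ` (W \<inter> U0'))"
      using homeomorphic_map_openness_eq[OF hm] by blast
    then have oO: "open (c0 ` (W \<inter> U0'))" using oc by (rule openin_open_trans)
    have "c0 \<eta> \<in> c0 ` (W \<inter> U0')" using W(2) etaU0' by blast
    then have "\<forall>\<^sub>F t in at 0. g t \<in> c0 ` (W \<inter> U0')"
      using topological_tendstoD[OF gc oO] by blast
    then have "\<forall>\<^sub>F t in nhds 0. g t \<in> c0 ` (W \<inter> U0')"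
      using ev_at_nhds \<open>c0 \<eta> \<in> c0 ` (W \<inter> U0')\<close> by (metis g_def c0_def f0)
    then show "\<forall>\<^sub>F t in nhds 0. f t \<in> W"
      using evU0
    proof eventually_elim
      case (elim t)
      then obtain p where p: "p \<in> W \<inter> U0'" "c0 p = c0 (f t)" by (auto simp: g_def c0_def)
      have "inj_on c0 U0'" using ch0 by (rule chart_inj)
      then have "p = f t" using p elim(2) by (auto dest: inj_onD)
      then show ?case using p by simp
    qed
  qed
  have part1: "(\<forall>\<^sub>F t in nhds 0. f t \<in> U) \<and> (\<lambda>t. \<phi> (f t)) differentiable (at 0)"
    if AU: "(U,\<phi>) \<in> A" and etaU: "\<eta> \<in> U" for U \<phi>
  proof
    have oU: "openin M0 (U \<inter> topspace M0)" using D2[OF chart_openin[OF chA[OF AU]]] .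
    then show "\<forall>\<^sub>F t in nhds 0. f t \<in> U" using Pc etaU eta by (auto elim: eventually_mono)
    define w where "w = \<iota> (vector_derivative g (at 0))"
    have wd: "((\<lambda>t. \<phi>0 (f t)) has_vector_derivative w) (at 0)"
    proof -
      have "(g has_vector_derivative vector_derivative g (at 0)) (at 0)"
        using gd unfolding g_def[symmetric] by (simp add: vector_derivative_works[symmetric])
      then have d: "((\<lambda>t. \<iota> (g t)) has_vector_derivative w) (at 0)"
        unfolding w_def by (rule bounded_linear.has_vector_derivative[OF bl])
      have ig: "\<iota> (g t) = \<phi>0 (f t)" if "f t \<in> U0'" for t
      proof -
        have "\<phi>0 (f t) \<in> range \<iota>" using rng0 that by blast
        then show ?thesis unfolding g_def by (rule f_inv_into_f)
      qed
      have "\<forall>\<^sub>F t in nhds 0. t \<in> UNIV \<longrightarrow> \<iota> (g t) = \<phi>0 (f t)"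
        using evU0 by (auto simp: ig elim: eventually_mono)
      moreover have "\<iota> (g 0) = \<phi>0 (f 0)" using ig etaU0' f0 by simp
      ultimately show ?thesis using d has_vector_derivative_cong_ev[where S=UNIV and x=0 and f="\<lambda>t. \<iota> (g t)" and g="\<lambda>t. \<phi>0 (f t)" and f'=w] by simp
    qed
    obtain E where "((\<lambda>t. \<phi> (f t)) has_vector_derivative blinfun_apply E w) (at 0)"
      using trans_curve[OF bl dense ch0[unfolded U0'_def c0_def] rng0[unfolded U0'_def]
          chart_inj[OF chA[OF A0]] D5[OF A0 AU etaU0 etaU] etaU0 etaU eta f0 Pc oU wd] by blast
    then show "(\<lambda>t. \<phi> (f t)) differentiable (at 0)" by (rule differentiableI_vector)
  qed
  show ?thesis
  proof (intro conjI)
    show "\<forall>(U,\<phi>)\<in>A. \<eta> \<in> U \<longrightarrow> (\<forall>\<^sub>F t in nhds 0. f t \<in> U) \<and> (\<lambda>t. \<phi> (f t)) differentiable (at 0)"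
      using part1 by blast
    show "\<forall>(U,\<phi>)\<in>A. \<forall>(V,\<psi>)\<in>A. \<eta> \<in> U \<and> \<eta> \<in> V \<longrightarrow>
            (\<forall>D. C1_deriv_at \<iota> (trans_map \<iota> U \<phi> \<psi>) (trans_dom \<iota> M0 U V \<phi>) (inv \<iota> (\<phi> \<eta>)) D \<longrightarrow>
               vector_derivative (\<lambda>t. \<psi> (f t)) (at 0)
                 = blinfun_apply D (vector_derivative (\<lambda>t. \<phi> (f t)) (at 0)))"
    proof (clarify)
      fix U \<phi> V \<psi> D
      assume AU: "(U,\<phi>) \<in> A" and AV: "(V,\<psi>) \<in> A" and etaU: "\<eta> \<in> U" and etaV: "\<eta> \<in> V"
        and D: "C1_deriv_at \<iota> (trans_map \<iota> U \<phi> \<psi>) (trans_dom \<iota> M0 U V \<phi>) (inv \<iota> (\<phi> \<eta>)) D"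
      have "(\<lambda>t. \<phi> (f t)) differentiable (at 0)" using part1[OF AU etaU] by blast
      then have wd: "((\<lambda>t. \<phi> (f t)) has_vector_derivative vector_derivative (\<lambda>t. \<phi> (f t)) (at 0)) (at 0)"
        by (simp add: vector_derivative_works[symmetric])
      have oV: "openin M0 (V \<inter> topspace M0)" using D2[OF chart_openin[OF chA[OF AV]]] .
      obtain E where E1: "((\<lambda>t. \<psi> (f t)) has_vector_derivative blinfun_apply E (vector_derivative (\<lambda>t. \<phi> (f t)) (at 0))) (at 0)"
        and E2: "\<forall>D. C1_deriv_at \<iota> (trans_map \<iota> U \<phi> \<psi>) (trans_dom \<iota> M0 U V \<phi>) (inv \<iota> (\<phi> \<eta>)) D \<longrightarrow> D = E"
        using trans_curve[OF bl dense conjunct2[OF D4[OF AU etaU]] conjunct1[OF D4[OF AU etaU]]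
          chart_inj[OF chA[OF AU]] D5[OF AU AV etaU etaV] etaU etaV eta f0 Pc oV wd] by blast
      have "D = E" using E2 D by blast
      then show "vector_derivative (\<lambda>t. \<psi> (f t)) (at 0)
                 = blinfun_apply D (vector_derivative (\<lambda>t. \<phi> (f t)) (at 0))"
        using vector_derivative_at[OF E1] by simp
    qed
  qed
qed

end
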